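(* Let $\pi_0,\pi_1:\mathcal X\to\{0,1\}$ be measurable policies. The parameter $\mathrm{FNA}_{\pi_0\to\pi_1}$ is identifiable (i.e., its identified set $\mathcal S(\mathrm{FNA}_{\pi_0\to\pi_1};P)$ is a singleton) if and only if, for $P$-almost every $X$, at least one of the following holds: $\pi_0(X)=\pi_1(X)$, or $\operatorname{Var}_P(Y\mid X,A=0)=0$, or $\operatorname{Var}_P(Y\mid X,A=1)=0$.
   Context: Let $\mathcal X$ be a measurable covariate space. A full (unobservable) distribution $\mathbb P$ is a law of $(X,A,Y(0),Y(1))$ with $X\in\mathcal X$, $A\in\{0,1\}$, $Y(0),Y(1)\in\{0,1\}$. The coarsening map $\mathcal C(x,a,y_0,y_1)=(x,a,ay_1+(1-a)y_0)$ induces the observed-data distribution $P=\mathbb P\circ\mathcal C^{-1}$ of $(X,A,Y)$, where $Y=Y(A)$. Write $e(X)=P(A=1\mid X)$ and assume overlap: $e(X)\in(0,1)$ a.s. Let $\mu(X,a)=E_P[Y\mid X,A=a]$. For policies $\pi_0,\pi_1:\mathcal X\to\{0,1\}$, define $\mathrm{FNA}_{\pi_0\to\pi_1}(\mathbb P)=\mathbb P\big(Y(\pi_0(X))=1,\,Y(\pi_1(X))=0\big)$. For a parameter $\psi(\mathbb P)$ its identified set is $\mathcal S(\psi;P)=\{\psi(\mathbb P):\ \mathbb P\circ\mathcal C^{-1}=P,\ \mathbb P(A=1\mid X)=\mathbb P(A=1\mid X,Y(a))\text{ for }a=0,1\}$ (the last condition is unconfoundedness). The parameter is identifiable if $|\mathcal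 S(\psi;P)|=1$. *)

theory Defs
  imports "HOL-Probability.Probability"
begin

text \<open>Full data: (X, (A, Y0, Y1)) with X in the covariate space M; observed data: (X, (A, Y)).
  Policies and binary variables are encoded as bool (True = 1).\<close>

type_synonym full_out = "bool \<times> bool \<times> bool"   (* (A, Y(0), Y(1)) *)
type_synonym obs_out = "bool \<times> bool"           (* (A, Y) *)

definition full_space :: "'x measure \<Rightarrow> ('x \<times> full_out) measure" where
  "full_space M = M \<Otimes>\<^sub>M count_space UNIV"

definition obs_space :: "'x measure \<Rightarrow> ('x \<times> obs_out) measure" where
  "obs_space M = M \<Otimes>\<^sub>M count_space UNIV"

definition coarsen :: "'x \<times> full_out \<Rightarrow> 'x \<times> obs_out" where
  "coarsen = (\<lambda>(x, a, y0, y1). (x, a, if a then y1 else y0))"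

definition pot :: "bool \<Rightarrow> bool \<times> bool \<Rightarrow> bool" where
  "pot t = (\<lambda>(y0, y1). if t then y1 else y0)"

text \<open>Law on M x (finite set) given by covariate law nu and a measurable
  conditional pmf kernel k (the conditional law of the finite part given X).\<close>
definition kernel_law :: "'x measure \<Rightarrow> ('x \<Rightarrow> 'w pmf) \<Rightarrow> ('x \<times> 'w) measure" where
  "kernel_law nu k = density (nu \<Otimes>\<^sub>M count_space UNIV) (\<lambda>(x, w). ennreal (pmf (k x) w))"

definition pmf_kernel :: "'x measure \<Rightarrow> ('x \<Rightarrow> 'w pmf) \<Rightarrow> bool" where
  "pmf_kernel M k \<longleftrightarrow> (\<forall>w. (\<lambda>x. pmf (k x) w) \<in> borel_measurable M)"

definition unconf_at :: "full_out pmf \<Rightarrow> bool" where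
  "unconf_at q \<longleftrightarrow> (\<forall>t y. measure_pmf.prob q {(a, ys). pot t ys = y} > 0 \<longrightarrow>
      measure_pmf.prob q {(a, ys). a \<and> pot t ys = y} / measure_pmf.prob q {(a, ys). pot t ys = y}
        = measure_pmf.prob q {(a, ys). a})"

text \<open>A full law PP (a probability measure on the full space) is unconfounded if
  its conditional law of (A,Y(0),Y(1)) given X (which exists since the second
  component is finite and is a.e. unique) satisfies the condition a.e. in X.\<close>
definition unconfounded :: "'x measure \<Rightarrow> ('x \<times> full_out) measure \<Rightarrow> bool" where
  "unconfounded M PP \<longleftrightarrow> (\<exists>q. pmf_kernel M q \<and> PP = kernel_law (distr PP M fst) q \<and>
      (AE x in distr PP M fst. unconf_at (q x)))"

definition FNA :: "'x measure \<Rightarrow> ('x \<Rightarrow> bool) \<Rightarrow> ('x \<Rightarrow> bool) \<Rightarrow> ('x \<times> full_out) measure \<Rightarrow> real" where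
  "FNA M pi0 pi1 PP = measure PP
     {(x, a, ys). x \<in> space M \<and> pot (pi0 x) ys \<and> \<not> pot (pi1 x) ys}"

definition ident_set :: "'x measure \<Rightarrow> (('x \<times> full_out) measure \<Rightarrow> real)
     \<Rightarrow> ('x \<times> obs_out) measure \<Rightarrow> real set" where
  "ident_set M psi P = {psi PP | PP. prob_space PP \<and> sets PP = sets (full_space M) \<and>
       distr PP (obs_space M) coarsen = P \<and> unconfounded M PP}"

text \<open>Observed-law quantities computed from the conditional law r x of (A,Y) given X = x.\<close>
definition prop_score :: "('x \<Rightarrow> obs_out pmf) \<Rightarrow> 'x \<Rightarrow> real" where
  "prop_score r x = measure_pmf.prob (r x) {w. fst w}"

definition cond_mean :: "('x \<Rightarrow> obs_out pmf) \<Rightarrow> 'x \<Rightarrow> bool \<Rightarrow> real" where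
  "cond_mean r x a = (\<Sum>y\<in>UNIV. pmf (r x) (a, y) * of_bool y) / measure_pmf.prob (r x) {w. fst w = a}"

definition cond_var :: "('x \<Rightarrow> obs_out pmf) \<Rightarrow> 'x \<Rightarrow> bool \<Rightarrow> real" where
  "cond_var r x a = (\<Sum>y\<in>UNIV. pmf (r x) (a, y) * (of_bool y - cond_mean r x a)\<^sup>2)
                     / measure_pmf.prob (r x) {w. fst w = a}"

end

theory Submission
  imports Defs
begin

lemma kl_f_meas:
  assumes "\<And>w. (\<lambda>x. pmf (k x) w) \<in> borel_measurable nu"
  shows "(\<lambda>(x,w::'w::countable). ennreal (pmf (k x) w)) \<in> borel_measurable (nu \<Otimes>\<^sub>M count_space UNIV)"
proof -
  have "(\<lambda>z. (\<lambda>w z. ennreal (pmf (k (fst z)) w)) (snd z) z) \<in> borel_measurable (nu \<Otimes>\<^sub>M count_space UNIV)"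
    apply (rule measurable_compose_countable)
    using assms by measurable
  then show ?thesis by (simp add: case_prod_beta')
qed

lemma kl_emeasure:
  assumes "\<And>w. (\<lambda>x. pmf (k x) w) \<in> borel_measurable nu"
    and S: "S \<in> sets (nu \<Otimes>\<^sub>M count_space (UNIV::'w::finite set))"
  shows "emeasure (kernel_law nu k) S = (\<integral>\<^sup>+x. emeasure (k x) (Pair x -` S) \<partial>nu)"
proof -
  interpret C: sigma_finite_measure "count_space (UNIV::'w set)"
    by (rule sigma_finite_measure_count_space_finite) simp
  have m: "(\<lambda>z. (case z of (x,w) \<Rightarrow> ennreal (pmf (k x) w)) * indicator S z) \<in> borel_measurable (nu \<Otimes>\<^sub>M count_space UNIV)"
    using kl_f_meas[OF assms(1)] S by measurable
  have "emeasure (kernel_law nu k) S = (\<integral>\<^sup>+z. (case z of (x,w) \<Rightarrow> ennreal (pmf (k x) w)) * indicator S z \<partial>(nu \<Otimes>\<^sub>M count_space UNIV))"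
    unfolding kernel_law_def using kl_f_meas[OF assms(1)] S
    by (simp add: emeasure_density)
  also have "\<dots> = (\<integral>\<^sup>+x. \<integral>\<^sup>+w. ennreal (pmf (k x) w) * indicator S (x,w) \<partial>count_space UNIV \<partial>nu)"
    using C.nn_integral_fst[OF m, symmetric] by simp
  also have "\<dots> = (\<integral>\<^sup>+x. emeasure (k x) (Pair x -` S) \<partial>nu)"
  proof (rule nn_integral_cong)
    fix x
    have "(\<integral>\<^sup>+w. ennreal (pmf (k x) w) * indicator S (x,w) \<partial>count_space UNIV)
        = (\<integral>\<^sup>+w. indicator (Pair x -` S) w \<partial>measure_pmf (k x))"
      by (simp add: nn_integral_measure_pmf indicator_def)
    also have "\<dots> = emeasure (k x) (Pair x -` S)" by simp
    finally show "(\<integral>\<^sup>+w. ennreal (pmf (k x) w) * indicator S (x,w) \<partial>count_space UNIV) = emeasure (k x) (Pair x -` S)" .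
  qed
  finally show ?thesis .
qed

lemma kl_sets[simp]: "sets (kernel_law nu k) = sets (nu \<Otimes>\<^sub>M count_space UNIV)"
  by (simp add: kernel_law_def)

lemma kl_space[simp]: "space (kernel_law nu k) = space nu \<times> UNIV"
  by (simp add: kernel_law_def space_pair_measure)

lemma kl_prob:
  assumes "prob_space nu" "\<And>w. (\<lambda>x. pmf (k x) w) \<in> borel_measurable nu"
  shows "prob_space (kernel_law nu k::('x \<times> 'w::finite) measure)"
proof (rule prob_spaceI)
  have "space nu \<times> UNIV \<in> sets (nu \<Otimes>\<^sub>M count_space (UNIV::'w set))"
    by (metis space_count_space space_pair_measure sets.top)
  then have "emeasure (kernel_law nu k) (space (kernel_law nu k)) = (\<integral>\<^sup>+x. emeasure (k x) (Pair x -` (space nu \<times> UNIV)) \<partial>nu)"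
    using kl_emeasure[OF assms(2)] by simp
  also have "\<dots> = (\<integral>\<^sup>+x. 1 \<partial>nu)"
    by (intro nn_integral_cong) (simp add: measure_pmf.emeasure_space_1[simplified])
  also have "\<dots> = 1" using assms(1) by (simp add: prob_space.emeasure_space_1)
  finally show "emeasure (kernel_law nu k) (space (kernel_law nu k)) = 1" .
qed

lemma kl_fst:
  assumes sets: "sets nu = sets M" and km: "\<And>w. (\<lambda>x. pmf (k x) w) \<in> borel_measurable nu"
  shows "distr (kernel_law nu (k::'x \<Rightarrow> 'w::finite pmf)) M fst = nu"
proof (rule measure_eqI)
  show "sets (distr (kernel_law nu k) M fst) = sets nu" using sets by simp
  fix B assume "B \<in> sets (distr (kernel_law nu k) M fst)"
  then have B: "B \<in> sets nu" using sets by simp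
  have "measurable (kernel_law nu k) M = measurable (nu \<Otimes>\<^sub>M count_space UNIV) nu"
    by (rule measurable_cong_sets) (simp_all add: sets)
  then have fm: "fst \<in> measurable (kernel_law nu k) M" by simp
  have eq: "fst -` B \<inter> (space nu \<times> UNIV) = B \<times> UNIV"
    using sets.sets_into_space[OF B] by auto
  have BS: "B \<times> UNIV \<in> sets (nu \<Otimes>\<^sub>M count_space (UNIV::'w set))"
    using B by (metis pair_measureI sets_UNIV space_count_space sets.top)
  have "emeasure (distr (kernel_law nu k) M fst) B = emeasure (kernel_law nu k) (B \<times> UNIV)"
    using fm B sets by (subst emeasure_distr) (simp_all add: eq)
  also have "\<dots> = (\<integral>\<^sup>+x. emeasure (k x) (Pair x -` (B \<times> UNIV)) \<partial>nu)"
    using kl_emeasure[OF km BS] .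
  also have "\<dots> = (\<integral>\<^sup>+x. indicator B x \<partial>nu)"
    by (intro nn_integral_cong) (simp add: indicator_def measure_pmf.emeasure_space_1[simplified])
  also have "\<dots> = emeasure nu B" using B by simp
  finally show "emeasure (distr (kernel_law nu k) M fst) B = emeasure nu B" .
qed


definition obs_c :: "full_out \<Rightarrow> obs_out" where
  "obs_c = (\<lambda>(a, y0, y1). (a, if a then y1 else y0))"

lemma prob_sum: "measure_pmf.prob p A = (\<Sum>w\<in>UNIV. pmf p w * indicator A w)" for p :: "'w::finite pmf"
proof -
  have "measure_pmf.prob p A = sum (pmf p) A" by (simp add: measure_measure_pmf_finite)
  also have "\<dots> = sum (pmf p) (UNIV \<inter> A)" by simp
  also have "\<dots> = (\<Sum>w\<in>UNIV. pmf p w * indicator A w)"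
    by (simp add: indicator_def sum.If_cases)
  finally show ?thesis .
qed

lemma map_meas:
  assumes "\<And>w. (\<lambda>x. pmf (k x) w) \<in> borel_measurable nu"
  shows "(\<lambda>x. pmf (map_pmf f (k x :: 'w::finite pmf)) v) \<in> borel_measurable nu"
proof -
  have "(\<lambda>x. pmf (map_pmf f (k x)) v) = (\<lambda>x. \<Sum>w\<in>UNIV. pmf (k x) w * indicator (f -` {v}) w)"
    by (simp add: pmf_map prob_sum)
  moreover have "(\<lambda>x. \<Sum>w\<in>UNIV. pmf (k x) w * indicator (f -` {v}) w) \<in> borel_measurable nu"
    using assms by measurable
  ultimately show ?thesis by simp
qed

lemma sets_pair_eq: "sets nu = sets M \<Longrightarrow> sets (M \<Otimes>\<^sub>M count_space UNIV) = sets (nu \<Otimes>\<^sub>M count_space UNIV)"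
  by (rule sets_pair_measure_cong) simp_all

lemma kl_coarsen:
  assumes sets: "sets nu = sets M" and km: "\<And>w. (\<lambda>x. pmf (k x) w) \<in> borel_measurable nu"
  shows "distr (kernel_law nu k) (obs_space M) coarsen = kernel_law nu (\<lambda>x. map_pmf obs_c (k x))"
proof (rule measure_eqI)
  show "sets (distr (kernel_law nu k) (obs_space M) coarsen) = sets (kernel_law nu (\<lambda>x. map_pmf obs_c (k x)))"
    using sets by (simp add: obs_space_def sets_pair_eq[OF sets])
  fix S assume "S \<in> sets (distr (kernel_law nu k) (obs_space M) coarsen)"
  then have S: "S \<in> sets (nu \<Otimes>\<^sub>M count_space UNIV)"
    using sets by (simp add: obs_space_def sets_pair_eq[OF sets])
  have ceq: "coarsen = (\<lambda>z. (fst z, obs_c (snd z)))"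
    by (auto simp: coarsen_def obs_c_def fun_eq_iff split: prod.splits)
  have meq: "measurable (kernel_law nu k) (obs_space M) = measurable (nu \<Otimes>\<^sub>M count_space UNIV) (nu \<Otimes>\<^sub>M count_space UNIV)"
    by (rule measurable_cong_sets) (simp_all add: sets obs_space_def sets_pair_eq[OF sets])
  have lm: "(\<lambda>z. (fst z, obs_c (snd z))) \<in> measurable (nu \<Otimes>\<^sub>M count_space UNIV) (nu \<Otimes>\<^sub>M count_space (UNIV::obs_out set))"
    by measurable
  have cm: "coarsen \<in> measurable (kernel_law nu k) (obs_space M)" unfolding meq ceq by (rule lm)
  have S': "S \<in> sets (obs_space M)" using S sets by (simp add: obs_space_def sets_pair_eq[OF sets])
  have pre: "coarsen -` S \<inter> space (kernel_law nu k) \<in> sets (nu \<Otimes>\<^sub>M count_space UNIV)"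
    using measurable_sets[OF cm S'] by simp
  have "emeasure (distr (kernel_law nu k) (obs_space M) coarsen) S = emeasure (kernel_law nu k) (coarsen -` S \<inter> space (kernel_law nu k))"
    using cm S' by (simp add: emeasure_distr)
  also have "\<dots> = (\<integral>\<^sup>+x. emeasure (k x) (Pair x -` (coarsen -` S \<inter> space (kernel_law nu k))) \<partial>nu)"
    using kl_emeasure[OF km pre] .
  also have "\<dots> = (\<integral>\<^sup>+x. emeasure (map_pmf obs_c (k x)) (Pair x -` S) \<partial>nu)"
  proof (rule nn_integral_cong)
    fix x assume "x \<in> space nu"
    then have "Pair x -` (coarsen -` S \<inter> space (kernel_law nu k)) = obs_c -` (Pair x -` S)"
      by (auto simp: ceq)
    then show "emeasure (k x) (Pair x -` (coarsen -` S \<inter> space (kernel_law nu k))) = emeasure (map_pmf obs_c (k x)) (Pair x -` S)"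
      by (simp add: emeasure_map_pmf)
  qed
  also have "\<dots> = emeasure (kernel_law nu (\<lambda>x. map_pmf obs_c (k x))) S"
    by (rule kl_emeasure[symmetric, OF map_meas[OF km] S])
  finally show "emeasure (distr (kernel_law nu k) (obs_space M) coarsen) S = emeasure (kernel_law nu (\<lambda>x. map_pmf obs_c (k x))) S" .
qed

lemma kl_point:
  assumes km: "\<And>w. (\<lambda>x. pmf (k x) w) \<in> borel_measurable nu" and B: "B \<in> sets nu"
  shows "emeasure (kernel_law nu (k :: 'x \<Rightarrow> 'w::finite pmf)) (B \<times> {w}) = emeasure (density nu (\<lambda>x. ennreal (pmf (k x) w))) B"
proof -
  have BS: "B \<times> {w} \<in> sets (nu \<Otimes>\<^sub>M count_space (UNIV::'w set))" using B by auto
  have "emeasure (kernel_law nu k) (B \<times> {w}) = (\<integral>\<^sup>+x. emeasure (k x) (Pair x -` (B \<times> {w})) \<partial>nu)"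
    using kl_emeasure[OF km BS] .
  also have "\<dots> = (\<integral>\<^sup>+x. ennreal (pmf (k x) w) * indicator B x \<partial>nu)"
    by (intro nn_integral_cong) (auto simp: indicator_def emeasure_pmf_single)
  also have "\<dots> = emeasure (density nu (\<lambda>x. ennreal (pmf (k x) w))) B"
    using B km by (simp add: emeasure_density)
  finally show ?thesis .
qed

lemma kl_unique:
  assumes P: "prob_space nu" and km1: "\<And>w. (\<lambda>x. pmf (k1 x) w) \<in> borel_measurable nu"
    and km2: "\<And>w. (\<lambda>x. pmf (k2 x) w) \<in> borel_measurable nu"
    and eq: "kernel_law nu k1 = kernel_law nu (k2 :: 'x \<Rightarrow> 'w::finite pmf)"
  shows "AE x in nu. k1 x = k2 x"
proof -
  interpret prob_space nu by (rule P)
  have "AE x in nu. pmf (k1 x) w = pmf (k2 x) w" for w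
  proof -
    have "density nu (\<lambda>x. ennreal (pmf (k1 x) w)) = density nu (\<lambda>x. ennreal (pmf (k2 x) w))"
    proof (rule measure_eqI)
      fix B assume "B \<in> sets (density nu (\<lambda>x. ennreal (pmf (k1 x) w)))"
      then have B: "B \<in> sets nu" by simp
      show "emeasure (density nu (\<lambda>x. ennreal (pmf (k1 x) w))) B = emeasure (density nu (\<lambda>x. ennreal (pmf (k2 x) w))) B"
        using kl_point[OF km1 B, of w] kl_point[OF km2 B, of w] eq by simp
    qed simp
    then have "AE x in nu. ennreal (pmf (k1 x) w) = ennreal (pmf (k2 x) w)"
      by (rule density_unique[rotated 2]) (use km1 km2 in measurable)
    then show ?thesis by eventually_elim simp
  qed
  then have "AE x in nu. \<forall>w. pmf (k1 x) w = pmf (k2 x) w" by (simp add: AE_all_countable)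
  then show ?thesis by eventually_elim (simp add: pmf_eqI)
qed

lemma kl_cong:
  assumes km1: "\<And>w. (\<lambda>x. pmf (k1 x) w) \<in> borel_measurable nu"
    and km2: "\<And>w. (\<lambda>x. pmf (k2 x) w) \<in> borel_measurable nu"
    and ae: "AE x in nu. k1 x = k2 x"
  shows "kernel_law nu k1 = kernel_law nu (k2 :: 'x \<Rightarrow> 'w::finite pmf)"
proof (rule measure_eqI)
  fix S assume "S \<in> sets (kernel_law nu k1)"
  then have S: "S \<in> sets (nu \<Otimes>\<^sub>M count_space (UNIV :: 'w set))" by simp
  show "emeasure (kernel_law nu k1) S = emeasure (kernel_law nu k2) S"
    unfolding kl_emeasure[OF km1 S] kl_emeasure[OF km2 S]
    by (rule nn_integral_cong_AE) (use ae in eventually_elim, simp)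
qed simp


lemma UNIV_full: "(UNIV::full_out set) = {(True,True,True),(True,True,False),(True,False,True),(True,False,False),(False,True,True),(False,True,False),(False,False,True),(False,False,False)}"
  by auto

lemma UNIV_obs: "(UNIV::obs_out set) = {(True,True),(True,False),(False,True),(False,False)}"
  by auto

lemma prob_full: "measure_pmf.prob (p::full_out pmf) A =
  pmf p (True,True,True) * indicator A (True,True,True) + pmf p (True,True,False) * indicator A (True,True,False) +
  pmf p (True,False,True) * indicator A (True,False,True) + pmf p (True,False,False) * indicator A (True,False,False) +
  pmf p (False,True,True) * indicator A (False,True,True) + pmf p (False,True,False) * indicator A (False,True,False) +
  pmf p (False,False,True) * indicator A (False,False,True) + pmf p (False,False,False) * indicator A (False,False,False)"
  apply (subst prob_sum, subst UNIV_full)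
  apply (simp only: sum.insert finite_insert finite.emptyI insert_iff empty_iff prod.inject simp_thms sum.empty add_0_right add.assoc)
  done

lemma prob_obs: "measure_pmf.prob (p::obs_out pmf) A =
  pmf p (True,True) * indicator A (True,True) + pmf p (True,False) * indicator A (True,False) +
  pmf p (False,True) * indicator A (False,True) + pmf p (False,False) * indicator A (False,False)"
  apply (subst prob_sum, subst UNIV_obs)
  apply (simp only: sum.insert finite_insert finite.emptyI insert_iff empty_iff prod.inject simp_thms sum.empty add_0_right add.assoc)
  done

lemma sum_full: "pmf (p::full_out pmf) (True,True,True) + pmf p (True,True,False) +
  pmf p (True,False,True) + pmf p (True,False,False) + pmf p (False,True,True) + pmf p (False,True,False) +
  pmf p (False,False,True) + pmf p (False,False,False) = 1"
  using prob_full[of p UNIV] by simp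

lemma sum_obs: "pmf (p::obs_out pmf) (True,True) + pmf p (True,False) + pmf p (False,True) + pmf p (False,False) = 1"
  using prob_obs[of p UNIV] by simp

definition ps :: "obs_out pmf \<Rightarrow> real" where "ps p = pmf p (True,True) + pmf p (True,False)"
definition mm1 :: "obs_out pmf \<Rightarrow> real" where "mm1 p = pmf p (True,True) / (pmf p (True,True) + pmf p (True,False))"
definition mm0 :: "obs_out pmf \<Rightarrow> real" where "mm0 p = pmf p (False,True) / (pmf p (False,True) + pmf p (False,False))"
definition tt :: "obs_out pmf \<Rightarrow> bool \<Rightarrow> real" where
  "tt p b = (if b then max 0 (mm0 p + mm1 p - 1) else min (mm0 p) (mm1 p))"

lemma prop_score_eq: "prop_score r x = ps (r x)"
  by (simp add: prop_score_def prob_obs ps_def)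

lemma frac01: "0 \<le> (a::real) \<Longrightarrow> 0 \<le> b \<Longrightarrow> 0 \<le> a / (a + b) \<and> a / (a + b) \<le> 1"
  by (cases "a + b = 0") (auto simp: divide_le_eq_1)

lemma mm01: "0 \<le> mm0 p" "mm0 p \<le> 1" "0 \<le> mm1 p" "mm1 p \<le> 1"
  using frac01[of "pmf p (False,True)" "pmf p (False,False)"] frac01[of "pmf p (True,True)" "pmf p (True,False)"]
  by (auto simp: mm0_def mm1_def)

lemma ps01: "0 \<le> ps p" "ps p \<le> 1"
  using sum_obs[of p] pmf_nonneg[of p] by (auto simp: ps_def) (smt (verit) pmf_nonneg)

lemma tt_props: "0 \<le> tt p b" "tt p b \<le> mm0 p" "tt p b \<le> mm1 p" "mm0 p + mm1 p - 1 \<le> tt p b"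
  using mm01[of p] by (auto simp: tt_def)

definition cw :: "real \<Rightarrow> real \<Rightarrow> real \<Rightarrow> bool \<times> bool \<Rightarrow> real" where
  "cw m0 m1 t = (\<lambda>(y0,y1). if y0 then (if y1 then t else m0 - t) else (if y1 then m1 - t else 1 - m0 - m1 + t))"

lemma pmf_cpl:
  assumes "0 \<le> t" "t \<le> m0" "t \<le> m1" "m0 + m1 - 1 \<le> t"
  shows "pmf (embed_pmf (cw m0 m1 t)) w = cw m0 m1 t w"
proof (rule pmf_embed_pmf)
  show nn: "\<And>x. 0 \<le> cw m0 m1 t x" using assms by (auto simp: cw_def)
  have "(\<integral>\<^sup>+x. ennreal (cw m0 m1 t x) \<partial>count_space UNIV) = (\<Sum>x\<in>UNIV. ennreal (cw m0 m1 t x))"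
    by (simp add: nn_integral_count_space_finite)
  also have "\<dots> = ennreal (\<Sum>x\<in>UNIV. cw m0 m1 t x)" using nn by (simp add: sum_ennreal)
  also have "(\<Sum>x\<in>UNIV. cw m0 m1 t x) = 1" by (simp add: UNIV_obs cw_def)
  finally show "(\<integral>\<^sup>+x. ennreal (cw m0 m1 t x) \<partial>count_space UNIV) = 1" by simp
qed

definition qq :: "obs_out pmf \<Rightarrow> bool \<Rightarrow> full_out pmf" where
  "qq p b = pair_pmf (bernoulli_pmf (ps p)) (embed_pmf (cw (mm0 p) (mm1 p) (tt p b)))"

lemma pmf_qq: "pmf (qq p b) (a, y0, y1) = (if a then ps p else 1 - ps p) * cw (mm0 p) (mm1 p) (tt p b) (y0, y1)"
  unfolding qq_def pmf_pair using ps01[of p] tt_props[of p b]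
  by (simp add: pmf_cpl)

lemma mulfrac: "0 \<le> (a::real) \<Longrightarrow> 0 \<le> b \<Longrightarrow> (a + b) * (a / (a + b)) = a"
  by (cases "a + b = 0") auto

lemma qq_map: "map_pmf obs_c (qq p b) = p"
proof (rule pmf_eqI)
  fix w :: obs_out
  have s: "pmf p (False,True) + pmf p (False,False) = 1 - ps p" using sum_obs[of p] by (simp add: ps_def)
  have m1: "ps p * mm1 p = pmf p (True,True)" unfolding ps_def mm1_def by (rule mulfrac) simp_all
  have m0: "(1 - ps p) * mm0 p = pmf p (False,True)" unfolding s[symmetric] mm0_def by (rule mulfrac) simp_all
  have "pmf (map_pmf obs_c (qq p b)) w = measure_pmf.prob (qq p b) (obs_c -` {w})" by (simp add: pmf_map)
  also have "\<dots> = pmf p w"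
    using m1 m0 s by (cases w) (auto simp: prob_full pmf_qq obs_c_def cw_def indicator_def ps_def algebra_simps)
  finally show "pmf (map_pmf obs_c (qq p b)) w = pmf p w" .
qed

lemma qq_unconf: "unconf_at (qq p b)"
  unfolding unconf_at_def
proof (intro allI impI)
  fix t y
  let ?A = "{(a, ys). pot t ys = y}"
  let ?B = "{(a, ys). a \<and> pot t ys = y}"
  assume pos: "0 < measure_pmf.prob (qq p b) ?A"
  have A: "measure_pmf.prob (qq p b) {(a, ys). a} = ps p"
    by (simp add: prob_full pmf_qq cw_def algebra_simps)
  have B: "measure_pmf.prob (qq p b) ?B = ps p * measure_pmf.prob (qq p b) ?A"
    by (cases t; cases y) (simp_all add: prob_full pmf_qq cw_def pot_def algebra_simps)
  show "measure_pmf.prob (qq p b) ?B / measure_pmf.prob (qq p b) ?A = measure_pmf.prob (qq p b) {(a, ys). a}"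
    unfolding A B using pos by simp
qed

lemma qq_G: "measure_pmf.prob (qq p b) {(a, ys). pot t0 ys \<and> \<not> pot t1 ys} =
   (if t0 = t1 then 0 else if t0 then mm1 p - tt p b else mm0 p - tt p b)"
  by (cases t0; cases t1) (simp_all add: prob_full pmf_qq cw_def pot_def algebra_simps)


lemma var_form: "(a::real) \<ge> 0 \<Longrightarrow> b \<ge> 0 \<Longrightarrow>
   (b * (0 - a/(a+b))\<^sup>2 + a * (1 - a/(a+b))\<^sup>2) / (a+b) = a*b/(a+b)\<^sup>2"
proof (cases "a + b = 0")
  case True
  assume "a \<ge> 0" "b \<ge> 0"
  then show ?thesis using True by simp
next
  case False
  then have h: "1 - a/(a+b) = b/(a+b)" by (simp add: field_simps)
  have "b * (0 - a/(a+b))\<^sup>2 + a * (1 - a/(a+b))\<^sup>2 = (b*a\<^sup>2 + a*b\<^sup>2)/(a+b)\<^sup>2"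
    unfolding h by (simp add: power_divide add_divide_distrib)
  also have "\<dots> = a*b*(a+b)/(a+b)\<^sup>2" by (simp add: power2_eq_square algebra_simps)
  finally show ?thesis using False by (simp add: power2_eq_square)
qed

lemma cv1: "cond_var r x True = pmf (r x) (True,True) * pmf (r x) (True,False) / (pmf (r x) (True,True) + pmf (r x) (True,False))\<^sup>2"
proof -
  let ?a = "pmf (r x) (True,True)" and ?b = "pmf (r x) (True,False)"
  have pr: "measure_pmf.prob (r x) (Collect fst) = ?a + ?b" by (simp add: prob_obs)
  have m: "cond_mean r x True = ?a / (?a + ?b)" by (simp add: cond_mean_def pr UNIV_bool)
  have "cond_var r x True = (?b * (0 - ?a/(?a+?b))\<^sup>2 + ?a * (1 - ?a/(?a+?b))\<^sup>2) / (?a+?b)"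
    by (simp add: cond_var_def m pr UNIV_bool)
  then show ?thesis using var_form[of ?a ?b] by simp
qed

lemma cv0: "cond_var r x False = pmf (r x) (False,True) * pmf (r x) (False,False) / (pmf (r x) (False,True) + pmf (r x) (False,False))\<^sup>2"
proof -
  let ?a = "pmf (r x) (False,True)" and ?b = "pmf (r x) (False,False)"
  have pr: "measure_pmf.prob (r x) {w. \<not> fst w} = ?a + ?b" by (simp add: prob_obs)
  have m: "cond_mean r x False = ?a / (?a + ?b)" by (simp add: cond_mean_def pr UNIV_bool)
  have "cond_var r x False = (?b * (0 - ?a/(?a+?b))\<^sup>2 + ?a * (1 - ?a/(?a+?b))\<^sup>2) / (?a+?b)"
    by (simp add: cond_var_def m pr UNIV_bool)
  then show ?thesis using var_form[of ?a ?b] by simp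
qed

lemma pw_det:
  fixes q :: "full_out pmf" and p :: "obs_out pmf"
  assumes mp: "map_pmf obs_c q = p" and un: "unconf_at q" and ov: "0 < ps p" "ps p < 1"
    and cond: "t0 = t1 \<or> pmf p (False,True) * pmf p (False,False) = 0 \<or> pmf p (True,True) * pmf p (True,False) = 0"
  shows "measure_pmf.prob q {(a, ys). pot t0 ys \<and> \<not> pot t1 ys} =
     (if t0 = t1 then 0 else if t0 then mm1 p - tt p False else mm0 p - tt p False)"
proof -
  have obs: "\<And>w. pmf p w = measure_pmf.prob q (obs_c -` {w})" using mp by (metis pmf_map)
  have eTT: "pmf p (True,True) = pmf q (True,True,True) + pmf q (True,False,True)"
    using obs[of "(True,True)"] by (simp add: prob_full obs_c_def indicator_def)
  have eTF: "pmf p (True,False) = pmf q (True,True,False) + pmf q (True,False,False)"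
    using obs[of "(True,False)"] by (simp add: prob_full obs_c_def indicator_def)
  have eFT: "pmf p (False,True) = pmf q (False,True,True) + pmf q (False,True,False)"
    using obs[of "(False,True)"] by (simp add: prob_full obs_c_def indicator_def)
  have eFF: "pmf p (False,False) = pmf q (False,False,True) + pmf q (False,False,False)"
    using obs[of "(False,False)"] by (simp add: prob_full obs_c_def indicator_def)
  have tot: "pmf q (True,True,True) + pmf q (True,True,False) +
    pmf q (True,False,True) + pmf q (True,False,False) + pmf q (False,True,True) + pmf q (False,True,False) +
    pmf q (False,False,True) + pmf q (False,False,False) = 1" by (rule sum_full)
  have nn: "0 \<le> pmf q (True,True,True)" "0 \<le> pmf q (True,True,False)" "0 \<le> pmf q (True,False,True)"
    "0 \<le> pmf q (True,False,False)" "0 \<le> pmf q (False,True,True)" "0 \<le> pmf q (False,True,False)"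
    "0 \<le> pmf q (False,False,True)" "0 \<le> pmf q (False,False,False)" by simp_all
  have psq: "ps p = pmf q (True,True,True) + pmf q (True,True,False) + pmf q (True,False,True) + pmf q (True,False,False)"
    using eTT eTF by (simp add: ps_def)
  have PA: "measure_pmf.prob q {(a, ys). a} = ps p" unfolding psq by (simp add: prob_full indicator_def)
  have u1raw: "0 < measure_pmf.prob q {(a, ys). pot True ys = True} \<Longrightarrow>
      measure_pmf.prob q {(a, ys). a \<and> pot True ys = True} / measure_pmf.prob q {(a, ys). pot True ys = True}
        = measure_pmf.prob q {(a, ys). a}"
    using un unfolding unconf_at_def by blast
  have P1: "measure_pmf.prob q {(a, ys). pot True ys = True} = pmf q (True,True,True) + pmf q (True,False,True) + pmf q (False,True,True) + pmf q (False,False,True)"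
    by (simp add: prob_full pot_def indicator_def)
  have PA1: "measure_pmf.prob q {(a, ys). a \<and> pot True ys = True} = pmf q (True,True,True) + pmf q (True,False,True)"
    by (simp add: prob_full pot_def indicator_def)
  have u0raw: "0 < measure_pmf.prob q {(a, ys). pot False ys = True} \<Longrightarrow>
      measure_pmf.prob q {(a, ys). a \<and> pot False ys = True} / measure_pmf.prob q {(a, ys). pot False ys = True}
        = measure_pmf.prob q {(a, ys). a}"
    using un unfolding unconf_at_def by blast
  have P0: "measure_pmf.prob q {(a, ys). pot False ys = True} = pmf q (True,True,True) + pmf q (True,True,False) + pmf q (False,True,True) + pmf q (False,True,False)"
    by (simp add: prob_full pot_def indicator_def)
  have PA0: "measure_pmf.prob q {(a, ys). a \<and> pot False ys = True} = pmf q (True,True,True) + pmf q (True,True,False)"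
    by (simp add: prob_full pot_def indicator_def)
  define S1 where "S1 = pmf q (True,True,True) + pmf q (True,False,True) + pmf q (False,True,True) + pmf q (False,False,True)"
  define S0 where "S0 = pmf q (True,True,True) + pmf q (True,True,False) + pmf q (False,True,True) + pmf q (False,True,False)"
  have s1: "S1 = mm1 p"
  proof (cases "0 < S1")
    case True
    then have "(pmf q (True,True,True) + pmf q (True,False,True)) / S1 = ps p"
      using u1raw P1 PA1 PA unfolding S1_def by simp
    then have "pmf p (True,True) = ps p * S1" using True eTT by (simp add: divide_eq_eq)
    moreover have "pmf p (True,True) + pmf p (True,False) = ps p" by (simp add: ps_def)
    ultimately show ?thesis using ov unfolding mm1_def by simp
  next
    case False
    then have "S1 = 0" using nn unfolding S1_def by linarith
    then have "pmf p (True,True) = 0" using nn eTT unfolding S1_def by linarith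
    then show ?thesis using \<open>S1 = 0\<close> by (simp add: mm1_def)
  qed
  have s0: "S0 = mm0 p"
  proof (cases "0 < S0")
    case True
    then have "(pmf q (True,True,True) + pmf q (True,True,False)) / S0 = ps p"
      using u0raw P0 PA0 PA unfolding S0_def by simp
    then have h: "pmf q (True,True,True) + pmf q (True,True,False) = ps p * S0" using True by (simp add: divide_eq_eq)
    have "pmf p (False,True) = S0 - ps p * S0" using h eFT unfolding S0_def by linarith
    then have "pmf p (False,True) = (1 - ps p) * S0" by (simp add: algebra_simps)
    moreover have "pmf p (False,True) + pmf p (False,False) = 1 - ps p" using sum_obs[of p] by (simp add: ps_def)
    ultimately show ?thesis using ov unfolding mm0_def by simp
  next
    case False
    then have "S0 = 0" using nn unfolding S0_def by linarith
    then have "pmf p (False,True) = 0" using nn eFT unfolding S0_def by linarith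
    then show ?thesis using \<open>S0 = 0\<close> by (simp add: mm0_def)
  qed
  have e1: "1 - ps p = pmf p (False,True) + pmf p (False,False)" using sum_obs[of p] by (simp add: ps_def)
  have c: "t0 = t1 \<or> mm0 p = 0 \<or> mm0 p = 1 \<or> mm1 p = 0 \<or> mm1 p = 1"
  proof -
    have a: "pmf p (False,True) = 0 \<Longrightarrow> mm0 p = 0" by (simp add: mm0_def)
    have b: "pmf p (False,False) = 0 \<Longrightarrow> mm0 p = 1" using ov e1 by (simp add: mm0_def)
    have c: "pmf p (True,True) = 0 \<Longrightarrow> mm1 p = 0" by (simp add: mm1_def)
    have d: "pmf p (True,False) = 0 \<Longrightarrow> mm1 p = 1" using ov by (simp add: mm1_def ps_def)
    show ?thesis using cond a b c d by auto
  qed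
  show ?thesis
  proof (cases t0; cases t1)
    assume "t0" "\<not> t1"
    then have L: "measure_pmf.prob q {(a, ys). pot t0 ys \<and> \<not> pot t1 ys} = pmf q (True,False,True) + pmf q (False,False,True)"
      by (simp add: prob_full pot_def indicator_def)
    show ?thesis using L c s0 s1 nn tot \<open>t0\<close> \<open>\<not> t1\<close> unfolding S0_def S1_def tt_def
      by (auto simp: min_def) (use nn mm01[of p] in linarith)+
  next
    assume "\<not> t0" "t1"
    then have L: "measure_pmf.prob q {(a, ys). pot t0 ys \<and> \<not> pot t1 ys} = pmf q (True,True,False) + pmf q (False,True,False)"
      by (simp add: prob_full pot_def indicator_def)
    show ?thesis using L c s0 s1 nn tot \<open>\<not> t0\<close> \<open>t1\<close> unfolding S0_def S1_def tt_def
      by (auto simp: min_def) (use nn mm01[of p] in linarith)+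
  qed (simp_all add: pot_def)
qed


lemma meas_bool2:
  fixes pi0 pi1 :: "'x \<Rightarrow> bool" and F :: "bool \<Rightarrow> bool \<Rightarrow> 'y"
  assumes p0: "pi0 \<in> nu \<rightarrow>\<^sub>M count_space UNIV" and p1: "pi1 \<in> nu \<rightarrow>\<^sub>M count_space UNIV"
    and c: "\<And>t s. F t s \<in> space N"
  shows "(\<lambda>x. F (pi0 x) (pi1 x)) \<in> nu \<rightarrow>\<^sub>M N"
proof -
  have h1: "(\<lambda>x. F t (pi1 x)) \<in> nu \<rightarrow>\<^sub>M N" for t
    by (rule measurable_compose_countable[where f="\<lambda>s x. F t s", OF _ p1]) (rule measurable_const, rule c)
  show ?thesis
    by (rule measurable_compose_countable[where f="\<lambda>t x. F t (pi1 x)", OF h1 p0])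
qed

definition Gf :: "('x \<Rightarrow> bool) \<Rightarrow> ('x \<Rightarrow> bool) \<Rightarrow> ('x \<Rightarrow> full_out pmf) \<Rightarrow> 'x \<Rightarrow> real" where
  "Gf pi0 pi1 q x = measure_pmf.prob (q x) {(a, ys). pot (pi0 x) ys \<and> \<not> pot (pi1 x) ys}"

lemma Gf_meas:
  assumes km: "\<And>w. (\<lambda>x. pmf (q x) w) \<in> borel_measurable nu"
    and p0: "pi0 \<in> nu \<rightarrow>\<^sub>M count_space UNIV" and p1: "pi1 \<in> nu \<rightarrow>\<^sub>M count_space UNIV"
  shows "Gf pi0 pi1 q \<in> borel_measurable nu"
proof -
  have eq: "Gf pi0 pi1 q = (\<lambda>x. \<Sum>w\<in>UNIV. pmf (q x) w * (\<lambda>t s. indicator {(a, ys). pot t ys \<and> \<not> pot s ys} w :: real) (pi0 x) (pi1 x))"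
    by (rule ext) (simp only: Gf_def prob_sum)
  have im: "(\<lambda>x. (\<lambda>t s. indicator {(a, ys). pot t ys \<and> \<not> pot s ys} w :: real) (pi0 x) (pi1 x)) \<in> borel_measurable nu" for w :: full_out
    by (rule meas_bool2[OF p0 p1]) simp
  show ?thesis unfolding eq
    by (intro borel_measurable_sum borel_measurable_times km im)
qed

lemma Gf_nn: "0 \<le> Gf pi0 pi1 q x" "Gf pi0 pi1 q x \<le> 1"
  by (simp_all add: Gf_def)

lemma Gf_int:
  assumes P: "prob_space nu" and km: "\<And>w. (\<lambda>x. pmf (q x) w) \<in> borel_measurable nu"
    and p0: "pi0 \<in> nu \<rightarrow>\<^sub>M count_space UNIV" and p1: "pi1 \<in> nu \<rightarrow>\<^sub>M count_space UNIV"
  shows "integrable nu (Gf pi0 pi1 q)"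
proof -
  interpret prob_space nu by (rule P)
  show ?thesis
  proof (rule integrable_const_bound[where B=1])
    show "AE x in nu. norm (Gf pi0 pi1 q x) \<le> 1"
      by (rule AE_I2) (simp add: abs_of_nonneg Gf_nn)
  qed (rule Gf_meas[OF km p0 p1])
qed

lemma fna_kl:
  assumes P: "prob_space nu" and sets: "sets nu = sets M" and km: "\<And>w. (\<lambda>x. pmf (q x) w) \<in> borel_measurable nu"
    and p0: "pi0 \<in> nu \<rightarrow>\<^sub>M count_space UNIV" and p1: "pi1 \<in> nu \<rightarrow>\<^sub>M count_space UNIV"
  shows "FNA M pi0 pi1 (kernel_law nu q) = integral\<^sup>L nu (Gf pi0 pi1 q)"
proof -
  interpret prob_space nu by (rule P)
  have sp: "space nu = space M" using sets by (rule sets_eq_imp_space_eq)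
  let ?S = "{(x, a, ys). x \<in> space M \<and> pot (pi0 x) ys \<and> \<not> pot (pi1 x) ys}"
  define H :: "full_out \<Rightarrow> bool \<Rightarrow> bool \<Rightarrow> bool" where "H = (\<lambda>w t s. (case w of (a, ys) \<Rightarrow> pot t ys \<and> \<not> pot s ys))"
  have Seq: "?S = (\<Union>w\<in>UNIV. {x\<in>space nu. H w (pi0 x) (pi1 x)} \<times> {w})"
    by (auto simp: H_def sp)
  have Hm: "(\<lambda>x. H w (pi0 x) (pi1 x)) \<in> nu \<rightarrow>\<^sub>M count_space UNIV" for w
    by (rule meas_bool2[OF p0 p1]) simp
  have Hs: "{x\<in>space nu. H w (pi0 x) (pi1 x)} \<in> sets nu" for w
  proof -
    have "(\<lambda>x. H w (pi0 x) (pi1 x)) -` {True} \<inter> space nu \<in> sets nu"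
      by (rule measurable_sets[OF Hm]) simp
    moreover have "(\<lambda>x. H w (pi0 x) (pi1 x)) -` {True} \<inter> space nu = {x\<in>space nu. H w (pi0 x) (pi1 x)}" by auto
    ultimately show ?thesis by simp
  qed
  have Ssets: "?S \<in> sets (nu \<Otimes>\<^sub>M count_space (UNIV :: full_out set))"
    unfolding Seq by (intro sets.finite_UN pair_measureI Hs) auto
  have em: "emeasure (kernel_law nu q) ?S = (\<integral>\<^sup>+x. ennreal (Gf pi0 pi1 q x) \<partial>nu)"
    unfolding kl_emeasure[OF km Ssets]
  proof (intro nn_integral_cong)
    fix x assume x: "x \<in> space nu"
    then have xM: "x \<in> space M" using sp by simp
    show "emeasure (q x) (Pair x -` ?S) = ennreal (Gf pi0 pi1 q x)"
      using xM by (simp add: Gf_def measure_pmf.emeasure_eq_measure)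
  qed
  have int: "integrable nu (Gf pi0 pi1 q)" by (rule Gf_int[OF P km p0 p1])
  have "emeasure (kernel_law nu q) ?S = ennreal (integral\<^sup>L nu (Gf pi0 pi1 q))"
    using em nn_integral_eq_integral[OF int AE_I2[OF Gf_nn(1)]] by simp
  moreover have "0 \<le> integral\<^sup>L nu (Gf pi0 pi1 q)" by (rule Bochner_Integration.integral_nonneg) (rule Gf_nn(1))
  ultimately show ?thesis unfolding FNA_def measure_def by simp
qed

lemma qq_meas:
  assumes rm: "\<And>w. (\<lambda>x. pmf (r x) w) \<in> borel_measurable nu"
  shows "(\<lambda>x. pmf (qq (r x) b) w) \<in> borel_measurable nu"
proof -
  note [measurable] = rm
  obtain a y0 y1 where w: "w = (a,y0,y1)" by (cases w) auto
  have m0: "(\<lambda>x. mm0 (r x)) \<in> borel_measurable nu" unfolding mm0_def by measurable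
  have m1: "(\<lambda>x. mm1 (r x)) \<in> borel_measurable nu" unfolding mm1_def by measurable
  have p: "(\<lambda>x. ps (r x)) \<in> borel_measurable nu" unfolding ps_def by measurable
  note [measurable] = m0 m1 p
  have t: "(\<lambda>x. tt (r x) b) \<in> borel_measurable nu" unfolding tt_def by (cases b) simp_all
  note [measurable] = t
  have eq: "(\<lambda>x. pmf (qq (r x) b) w) = (\<lambda>x. (if a then ps (r x) else 1 - ps (r x)) *
     (if y0 then (if y1 then tt (r x) b else mm0 (r x) - tt (r x) b) else (if y1 then mm1 (r x) - tt (r x) b else 1 - mm0 (r x) - mm1 (r x) + tt (r x) b)))"
    by (simp add: w pmf_qq cw_def)
  show ?thesis unfolding eq by (cases a; cases y0; cases y1) simp_all
qed

lemma ident_elim: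
  assumes P: "prob_space nu" and sets: "sets nu = sets M"
    and rm: "\<And>w. (\<lambda>x. pmf (r x) w) \<in> borel_measurable nu"
    and p0: "pi0 \<in> nu \<rightarrow>\<^sub>M count_space UNIV" and p1: "pi1 \<in> nu \<rightarrow>\<^sub>M count_space UNIV"
    and v: "v \<in> ident_set M (FNA M pi0 pi1) (kernel_law nu r)"
  shows "\<exists>q. (\<forall>w. (\<lambda>x. pmf (q x) w) \<in> borel_measurable nu) \<and>
     (AE x in nu. map_pmf obs_c (q x) = r x \<and> unconf_at (q x)) \<and> v = integral\<^sup>L nu (Gf pi0 pi1 q)"
proof -
  from v obtain PP where PP: "prob_space PP" "sets PP = sets (full_space M)"
      "distr PP (obs_space M) coarsen = kernel_law nu r" "unconfounded M PP" and vPP: "v = FNA M pi0 pi1 PP"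
    by (auto simp: ident_set_def)
  from PP(4) obtain q where qk: "pmf_kernel M q" and PPq: "PP = kernel_law (distr PP M fst) q"
      and un: "AE x in distr PP M fst. unconf_at (q x)"
    by (auto simp: unconfounded_def)
  define D where "D = distr PP M fst"
  have PPD: "PP = kernel_law D q" using PPq unfolding D_def .
  have "measurable PP M = measurable (M \<Otimes>\<^sub>M count_space (UNIV :: full_out set)) M"
    by (rule measurable_cong_sets) (simp_all add: PP(2) full_space_def)
  then have fm: "fst \<in> PP \<rightarrow>\<^sub>M M" by simp
  have Dsets: "sets D = sets M" by (simp add: D_def)
  have Dprob: "prob_space D" unfolding D_def by (rule prob_space.prob_space_distr[OF PP(1) fm])
  have qD: "\<And>w. (\<lambda>x. pmf (q x) w) \<in> borel_measurable D"
    using qk unfolding pmf_kernel_def measurable_cong_sets[OF Dsets refl] by blast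
  have eq1: "kernel_law D (\<lambda>x. map_pmf obs_c (q x)) = kernel_law nu r"
    using PP(3) kl_coarsen[OF Dsets qD] PPD by simp
  have "distr (kernel_law D (\<lambda>x. map_pmf obs_c (q x))) M fst = D"
    by (rule kl_fst[OF Dsets map_meas[OF qD]])
  moreover have "distr (kernel_law nu r) M fst = nu" by (rule kl_fst[OF sets rm])
  ultimately have Dnu: "D = nu" using eq1 by simp
  have qnu: "\<And>w. (\<lambda>x. pmf (q x) w) \<in> borel_measurable nu" using qD Dnu by simp
  have ae1: "AE x in nu. map_pmf obs_c (q x) = r x"
    by (rule kl_unique[OF P map_meas[OF qnu] rm]) (use eq1 Dnu in simp)
  have ae2: "AE x in nu. unconf_at (q x)" using un[folded D_def] unfolding Dnu by assumption
  have "v = integral\<^sup>L nu (Gf pi0 pi1 q)"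
    using vPP PPD Dnu fna_kl[OF P sets qnu p0 p1] by simp
  then show ?thesis using qnu ae1 ae2 by auto
qed

lemma ident_mem:
  assumes P: "prob_space nu" and sets: "sets nu = sets M"
    and qm: "\<And>w. (\<lambda>x. pmf (q x) w) \<in> borel_measurable nu"
    and p0: "pi0 \<in> nu \<rightarrow>\<^sub>M count_space UNIV" and p1: "pi1 \<in> nu \<rightarrow>\<^sub>M count_space UNIV"
    and valid: "\<And>x. map_pmf obs_c (q x) = r x" and un: "\<And>x. unconf_at (q x)"
  shows "integral\<^sup>L nu (Gf pi0 pi1 q) \<in> ident_set M (FNA M pi0 pi1) (kernel_law nu r)"
proof -
  let ?PP = "kernel_law nu q"
  have f: "FNA M pi0 pi1 ?PP = integral\<^sup>L nu (Gf pi0 pi1 q)" by (rule fna_kl[OF P sets qm p0 p1])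
  have pr: "prob_space ?PP" by (rule kl_prob[OF P qm])
  have se: "sets ?PP = sets (full_space M)" by (simp add: full_space_def sets_pair_eq[OF sets])
  have rr: "(\<lambda>x. map_pmf obs_c (q x)) = r" using valid by (simp add: fun_eq_iff)
  have di: "distr ?PP (obs_space M) coarsen = kernel_law nu r"
    using kl_coarsen[OF sets qm] rr by simp
  have fs: "distr ?PP M fst = nu" by (rule kl_fst[OF sets qm])
  have pk: "pmf_kernel M q" using qm unfolding pmf_kernel_def measurable_cong_sets[OF sets refl] by blast
  have uc: "unconfounded M ?PP" unfolding unconfounded_def fs
    using pk un by auto
  show ?thesis unfolding ident_set_def mem_Collect_eq
    by (rule exI[of _ ?PP]) (use f pr se di uc in simp)
qed

lemma var_prod0:
  assumes "0 < ps p" "ps p < 1" "mm0 p = 0 \<or> mm0 p = 1"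
  shows "pmf p (False,True) * pmf p (False,False) = 0"
proof -
  have e1: "pmf p (False,True) + pmf p (False,False) = 1 - ps p" using sum_obs[of p] by (simp add: ps_def)
  then have "pmf p (False,True) + pmf p (False,False) > 0" using assms by simp
  then show ?thesis using assms(3) by (auto simp: mm0_def field_simps)
qed

lemma var_prod1:
  assumes "0 < ps p" "ps p < 1" "mm1 p = 0 \<or> mm1 p = 1"
  shows "pmf p (True,True) * pmf p (True,False) = 0"
proof -
  have "pmf p (True,True) + pmf p (True,False) > 0" using assms by (simp add: ps_def)
  then show ?thesis using assms(3) by (auto simp: mm1_def field_simps)
qed

lemma var_zero_prod: "0 \<le> (a::real) \<Longrightarrow> 0 \<le> b \<Longrightarrow> a * b / (a + b)\<^sup>2 = 0 \<Longrightarrow> a * b = 0"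
  by (cases "a + b = 0") auto

theorem theorem1:
  fixes M :: "'x measure" and nu :: "'x measure" and r :: "'x \<Rightarrow> obs_out pmf"
    and pi0 pi1 :: "'x \<Rightarrow> bool"
  assumes nu_prob: "prob_space nu" and nu_sets: "sets nu = sets M"
    and r_kernel: "pmf_kernel M r"
    and overlap: "AE x in nu. 0 < prop_score r x \<and> prop_score r x < 1"
    and pi0_meas: "pi0 \<in> M \<rightarrow>\<^sub>M count_space UNIV"
    and pi1_meas: "pi1 \<in> M \<rightarrow>\<^sub>M count_space UNIV"
  shows "(\<exists>v. ident_set M (FNA M pi0 pi1) (kernel_law nu r) = {v}) \<longleftrightarrow>
         (AE x in nu. pi0 x = pi1 x \<or> cond_var r x False = 0 \<or> cond_var r x True = 0)"
proof -
  have rm: "\<And>w. (\<lambda>x. pmf (r x) w) \<in> borel_measurable nu"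
    using r_kernel unfolding pmf_kernel_def measurable_cong_sets[OF nu_sets refl] by blast
  have p0: "pi0 \<in> nu \<rightarrow>\<^sub>M count_space UNIV" using pi0_meas unfolding measurable_cong_sets[OF nu_sets refl] .
  have p1: "pi1 \<in> nu \<rightarrow>\<^sub>M count_space UNIV" using pi1_meas unfolding measurable_cong_sets[OF nu_sets refl] .
  define Q where "Q = (\<lambda>b x. qq (r x) b)"
  have Qm: "\<And>b w. (\<lambda>x. pmf (Q b x) w) \<in> borel_measurable nu" unfolding Q_def by (rule qq_meas[OF rm])
  have mem: "\<And>b. integral\<^sup>L nu (Gf pi0 pi1 (Q b)) \<in> ident_set M (FNA M pi0 pi1) (kernel_law nu r)"
    by (rule ident_mem[OF nu_prob nu_sets Qm p0 p1]) (simp_all add: Q_def qq_map qq_unconf)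
  have GQ: "\<And>b x. Gf pi0 pi1 (Q b) x = (if pi0 x = pi1 x then 0 else if pi0 x then mm1 (r x) - tt (r x) b else mm0 (r x) - tt (r x) b)"
    by (simp add: Gf_def Q_def qq_G)
  have Gm: "\<And>b. Gf pi0 pi1 (Q b) \<in> borel_measurable nu" by (rule Gf_meas[OF Qm p0 p1])
  have Gi: "\<And>b. integrable nu (Gf pi0 pi1 (Q b))" by (rule Gf_int[OF nu_prob Qm p0 p1])
  show ?thesis
  proof
    assume "\<exists>v. ident_set M (FNA M pi0 pi1) (kernel_law nu r) = {v}"
    then obtain v where v: "ident_set M (FNA M pi0 pi1) (kernel_law nu r) = {v}" by blast
    have eqI: "integral\<^sup>L nu (Gf pi0 pi1 (Q True)) = integral\<^sup>L nu (Gf pi0 pi1 (Q False))"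
      using mem[of True] mem[of False] v by simp
    define Df where "Df = (\<lambda>x. Gf pi0 pi1 (Q True) x - Gf pi0 pi1 (Q False) x)"
    have Dnn: "\<And>x. 0 \<le> Df x" unfolding Df_def GQ using mm01 by (auto simp: tt_def)
    have Di: "integrable nu Df" unfolding Df_def using Gi by simp
    have "integral\<^sup>L nu Df = 0" unfolding Df_def using eqI Gi by simp
    then have "AE x in nu. Df x = 0" using integral_nonneg_eq_0_iff_AE[OF Di] Dnn by simp
    then show "AE x in nu. pi0 x = pi1 x \<or> cond_var r x False = 0 \<or> cond_var r x True = 0"
      using overlap
    proof eventually_elim
      fix x assume D0: "Df x = 0" and ov: "0 < prop_score r x \<and> prop_score r x < 1"
      show "pi0 x = pi1 x \<or> cond_var r x False = 0 \<or> cond_var r x True = 0"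
      proof (cases "pi0 x = pi1 x")
        case False
        then have "tt (r x) True = tt (r x) False" using D0 unfolding Df_def GQ by (auto split: if_splits)
        then have "mm0 (r x) = 0 \<or> mm0 (r x) = 1 \<or> mm1 (r x) = 0 \<or> mm1 (r x) = 1"
          using mm01[of "r x"] by (auto simp: tt_def min_def max_def split: if_splits)
        then consider "mm0 (r x) = 0 \<or> mm0 (r x) = 1" | "mm1 (r x) = 0 \<or> mm1 (r x) = 1" by blast
        then show ?thesis
        proof cases
          case 1
          have ps: "0 < ps (r x)" "ps (r x) < 1" using ov by (simp_all add: prop_score_eq)
          have "pmf (r x) (False,True) * pmf (r x) (False,False) = 0" by (rule var_prod0[OF ps 1])
          then show ?thesis by (simp add: cv0)
        next
          case 2
          have ps: "0 < ps (r x)" "ps (r x) < 1" using ov by (simp_all add: prop_score_eq)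
          have "pmf (r x) (True,True) * pmf (r x) (True,False) = 0" by (rule var_prod1[OF ps 2])
          then show ?thesis by (simp add: cv1)
        qed
      qed simp
    qed
  next
    assume cond: "AE x in nu. pi0 x = pi1 x \<or> cond_var r x False = 0 \<or> cond_var r x True = 0"
    define v0 where "v0 = integral\<^sup>L nu (Gf pi0 pi1 (Q False))"
    have "ident_set M (FNA M pi0 pi1) (kernel_law nu r) = {v0}"
    proof (intro equalityI subsetI)
      fix v assume v: "v \<in> ident_set M (FNA M pi0 pi1) (kernel_law nu r)"
      obtain q where qm: "\<And>w. (\<lambda>x. pmf (q x) w) \<in> borel_measurable nu"
        and qae: "AE x in nu. map_pmf obs_c (q x) = r x \<and> unconf_at (q x)"
        and vq: "v = integral\<^sup>L nu (Gf pi0 pi1 q)"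
        using ident_elim[OF nu_prob nu_sets rm p0 p1 v] by blast
      have "AE x in nu. Gf pi0 pi1 q x = Gf pi0 pi1 (Q False) x"
        using qae cond overlap
      proof eventually_elim
        fix x assume h: "map_pmf obs_c (q x) = r x \<and> unconf_at (q x)"
          and c: "pi0 x = pi1 x \<or> cond_var r x False = 0 \<or> cond_var r x True = 0"
          and ov: "0 < prop_score r x \<and> prop_score r x < 1"
        have c': "pi0 x = pi1 x \<or> pmf (r x) (False,True) * pmf (r x) (False,False) = 0 \<or> pmf (r x) (True,True) * pmf (r x) (True,False) = 0"
          using c var_zero_prod[of "pmf (r x) (False,True)" "pmf (r x) (False,False)"]
            var_zero_prod[of "pmf (r x) (True,True)" "pmf (r x) (True,False)"]
          unfolding cv0 cv1 by auto
        have ov': "0 < ps (r x)" "ps (r x) < 1" using ov by (simp_all add: prop_score_eq)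
        show "Gf pi0 pi1 q x = Gf pi0 pi1 (Q False) x"
          unfolding GQ unfolding Gf_def using pw_det[OF conjunct1[OF h] conjunct2[OF h] ov' c'] .
      qed
      then have "v = v0" unfolding vq v0_def by (rule integral_cong_AE[OF Gf_meas[OF qm p0 p1] Gm])
      then show "v \<in> {v0}" by simp
    next
      fix v assume "v \<in> {v0}"
      then show "v \<in> ident_set M (FNA M pi0 pi1) (kernel_law nu r)" using mem[of False] v0_def by simp
    qed
    then show "\<exists>v. ident_set M (FNA M pi0 pi1) (kernel_law nu r) = {v}" by blast
  qed
qed

end
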